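(* Let $T$ be a tree and $\alpha\ne\beta\in V(T)$, and let $\gamma_0=\alpha,\gamma_1,\dots,\gamma_{k-1},\gamma_k=\beta$ be the successive vertices of the unique minimal path in $T$ from $\alpha$ to $\beta$. Then inside $\mathsf L_T$, the Euclidean spaces $\mathsf L_T(\alpha)$ and $\mathsf L_T(\beta)$ are glued along closed quadrants, where a point $\{x_\gamma(\alpha)\}$ of $\mathsf L_T(\alpha)$ is identified with a point $\{x_\gamma(\beta)\}$ of $\mathsf L_T(\beta)$ whenever $$x_{\gamma_1}(\alpha)=x_\alpha(\beta),\ x_{\gamma_2}(\alpha)=x_{\gamma_1}(\beta),\ \dots,\ x_{\gamma_{k-1}}(\alpha)=x_{\gamma_{k-2}}(\beta),\ x_\beta(\alpha)=x_{\gamma_{k-1}}(\beta)\ge0,$$ and $x_\gamma(\alpha)=x_\gamma(\beta)$ for all $\gamma\notin\{\alpha,\gamma_1,\dots,\gamma_{k-1},\beta\}$.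
   Context: A tree is a nonempty finite connected acyclic graph with vertex set $V(T)$ and edge set $E(T)$ (two-element subsets of $V(T)$). Arboreal singularity: for $\alpha\in V(T)$ let $\mathsf L_T(\alpha)=\mathbb R^{V(T)\setminus\{\alpha\}}$ with coordinates $x_\gamma(\alpha)$, $\gamma\ne\alpha$; $\mathsf L_T$ is the quotient of $\coprod_{\alpha\in V(T)}\mathsf L_T(\alpha)$ by the equivalence relation generated by the $\{\alpha,\beta\}$-edge gluings, for $\{\alpha,\beta\}\in E(T)$: $\{x_\gamma(\alpha)\}\sim\{x_\gamma(\beta)\}$ whenever $x_\beta(\alpha)=x_\alpha(\beta)\ge0$ and $x_\gamma(\alpha)=x_\gamma(\beta)$ for all $\gamma\ne\alpha,\beta$. *)

theory Defs
  imports Complex_Main "HOL-Library.FuncSet"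
begin

definition edges_ok :: "'v set \<Rightarrow> 'v set set \<Rightarrow> bool" where
  "edges_ok V E \<longleftrightarrow> (\<forall>e\<in>E. \<exists>a b. a \<in> V \<and> b \<in> V \<and> a \<noteq> b \<and> e = {a, b})"

definition is_walk :: "'v set \<Rightarrow> 'v set set \<Rightarrow> 'v list \<Rightarrow> bool" where
  "is_walk V E ps \<longleftrightarrow> ps \<noteq> [] \<and> set ps \<subseteq> V \<and>
     (\<forall>i. Suc i < length ps \<longrightarrow> {ps ! i, ps ! Suc i} \<in> E)"

definition connected_graph :: "'v set \<Rightarrow> 'v set set \<Rightarrow> bool" where
  "connected_graph V E \<longleftrightarrow>
     (\<forall>a\<in>V. \<forall>b\<in>V. \<exists>ps. is_walk V E ps \<and> hd ps = a \<and> last ps = b)"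

definition has_cycle :: "'v set \<Rightarrow> 'v set set \<Rightarrow> bool" where
  "has_cycle V E \<longleftrightarrow> (\<exists>ps. is_walk V E ps \<and> distinct ps \<and> length ps \<ge> 3 \<and>
      {last ps, hd ps} \<in> E)"

definition is_tree :: "'v set \<Rightarrow> 'v set set \<Rightarrow> bool" where
  "is_tree V E \<longleftrightarrow> V \<noteq> {} \<and> finite V \<and> edges_ok V E \<and>
     connected_graph V E \<and> \<not> has_cycle V E"

text \<open>The chart L_T(alpha) = R^(V - {alpha}), represented by functions
  extensional outside V - {alpha}. Points of the disjoint union are pairs (alpha, x).\<close>
definition chart :: "'v set \<Rightarrow> 'v \<Rightarrow> ('v \<Rightarrow> real) set" where
  "chart V a = extensional (V - {a})"

definition in_union :: "'v set \<Rightarrow> 'v \<times> ('v \<Rightarrow> real) \<Rightarrow> bool" where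
  "in_union V p \<longleftrightarrow> fst p \<in> V \<and> snd p \<in> chart V (fst p)"

definition edge_glue :: "'v set \<Rightarrow> 'v set set \<Rightarrow>
    'v \<times> ('v \<Rightarrow> real) \<Rightarrow> 'v \<times> ('v \<Rightarrow> real) \<Rightarrow> bool" where
  "edge_glue V E p q \<longleftrightarrow> in_union V p \<and> in_union V q \<and>
     (let a = fst p; b = fst q; x = snd p; y = snd q in
       {a, b} \<in> E \<and> x b = y a \<and> x b \<ge> 0 \<and>
       (\<forall>g\<in>V - {a, b}. x g = y g))"

definition arb_equiv :: "'v set \<Rightarrow> 'v set set \<Rightarrow>
    'v \<times> ('v \<Rightarrow> real) \<Rightarrow> 'v \<times> ('v \<Rightarrow> real) \<Rightarrow> bool" where
  "arb_equiv V E = equivclp (edge_glue V E)"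

end

theory Submission
  imports Defs
begin

lemma walk_single: "is_walk V E [u] \<longleftrightarrow> u \<in> V"
  by (simp add: is_walk_def)

lemma walk_Cons:
  assumes "xs \<noteq> []"
  shows "is_walk V E (u # xs) \<longleftrightarrow> u \<in> V \<and> {u, hd xs} \<in> E \<and> is_walk V E xs"
proof -
  have "(\<forall>i. Suc i < length (u # xs) \<longrightarrow> {(u#xs) ! i, (u#xs) ! Suc i} \<in> E) \<longleftrightarrow>
        {u, hd xs} \<in> E \<and> (\<forall>i. Suc i < length xs \<longrightarrow> {xs ! i, xs ! Suc i} \<in> E)"
    (is "?L \<longleftrightarrow> ?R")
  proof
    assume L: ?L
    have "{u, hd xs} \<in> E" using L[rule_format, of 0] assms by (cases xs) auto
    moreover have "\<forall>i. Suc i < length xs \<longrightarrow> {xs ! i, xs ! Suc i} \<in> E"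
      using L[rule_format, of "Suc _"] by auto
    ultimately show ?R by blast
  next
    assume R: ?R
    show ?L
    proof (intro allI impI)
      fix i assume "Suc i < length (u # xs)"
      then show "{(u#xs) ! i, (u#xs) ! Suc i} \<in> E"
        using R assms by (cases i) (auto simp: hd_conv_nth)
    qed
  qed
  then show ?thesis using assms by (auto simp: is_walk_def)
qed

lemma walk_append:
  assumes "xs \<noteq> []" "ys \<noteq> []"
  shows "is_walk V E (xs @ ys) \<longleftrightarrow> is_walk V E xs \<and> is_walk V E ys \<and> {last xs, hd ys} \<in> E"
  using assms
proof (induction xs)
  case Nil then show ?case by simp
next
  case (Cons u xs)
  show ?case
  proof (cases "xs = []")
    case True
    then show ?thesis using Cons.prems walk_Cons[of ys V E u] by (auto simp: walk_single)
  next
    case False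
    have "is_walk V E ((u # xs) @ ys) \<longleftrightarrow> u \<in> V \<and> {u, hd xs} \<in> E \<and> is_walk V E (xs @ ys)"
      using walk_Cons[of "xs @ ys" V E u] False by simp
    also have "\<dots> \<longleftrightarrow> u \<in> V \<and> {u, hd xs} \<in> E \<and> is_walk V E xs \<and> is_walk V E ys \<and> {last xs, hd ys} \<in> E"
      using Cons False by simp
    finally show ?thesis using walk_Cons[of xs V E u] False by auto
  qed
qed

lemma walk_prefix: "is_walk V E (xs @ ys) \<Longrightarrow> xs \<noteq> [] \<Longrightarrow> is_walk V E xs"
  by (cases "ys = []") (auto simp: walk_append)

lemma walk_suffix: "is_walk V E (xs @ ys) \<Longrightarrow> ys \<noteq> [] \<Longrightarrow> is_walk V E ys"
  by (cases "xs = []") (auto simp: walk_append)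

lemma walk_rev: "is_walk V E xs \<Longrightarrow> is_walk V E (rev xs)"
proof (induction xs)
  case Nil then show ?case by (simp add: is_walk_def)
next
  case (Cons u xs)
  show ?case
  proof (cases "xs = []")
    case True then show ?thesis using Cons by simp
  next
    case False
    then have "u \<in> V \<and> {u, hd xs} \<in> E \<and> is_walk V E xs" using Cons.prems walk_Cons[of xs V E u] by simp
    then show ?thesis using Cons.IH False
      by (simp add: walk_append walk_single last_rev insert_commute)
  qed
qed


lemma walk_unique:
  assumes nc: "\<not> has_cycle V E"
  shows "is_walk V E ps \<Longrightarrow> distinct ps \<Longrightarrow> is_walk V E qs \<Longrightarrow> distinct qs \<Longrightarrow>
    hd ps = hd qs \<Longrightarrow> last ps = last qs \<Longrightarrow> ps = qs"
proof (induction ps arbitrary: qs)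
  case Nil then show ?case by (simp add: is_walk_def)
next
  case (Cons b ps')
  have qsne: "qs \<noteq> []" using Cons.prems(3) by (simp add: is_walk_def)
  define qs' where "qs' = tl qs"
  have qs: "qs = b # qs'" using qsne Cons.prems(5) unfolding qs'_def by (metis list.collapse list.sel(1))
  show ?case
  proof (cases "ps' = []")
    case True
    have "qs' = []"
    proof (rule ccontr)
      assume "qs' \<noteq> []"
      then have "last qs' = b" using Cons.prems(6) True qs by simp
      then have "b \<in> set qs'" using \<open>qs' \<noteq> []\<close> by (metis last_in_set)
      then show False using Cons.prems(4) qs by simp
    qed
    then show ?thesis using True qs by simp
  next
    case ps'ne: False
    show ?thesis
    proof (cases "qs' = []")
      case True
      have "last ps' = b" using Cons.prems(6) True qs ps'ne by simp
      then have "b \<in> set ps'" using ps'ne by (metis last_in_set)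
      then show ?thesis using Cons.prems(2) by simp
    next
      case qs'ne: False
      have wp: "b \<in> V" "{b, hd ps'} \<in> E" "is_walk V E ps'"
        using Cons.prems(1) walk_Cons[OF ps'ne] by auto
      have wq: "{b, hd qs'} \<in> E" "is_walk V E qs'"
        using Cons.prems(3) walk_Cons[OF qs'ne] qs by auto
      have lasteq: "last ps' = last qs'" using Cons.prems(6) qs ps'ne qs'ne by simp
      show ?thesis
      proof (cases "hd ps' = hd qs'")
        case True
        then have "ps' = qs'" using Cons.IH[of qs'] wp wq Cons.prems qs lasteq by auto
        then show ?thesis using qs by simp
      next
        case uv: False
        have "last ps' \<in> set ps'" "last qs' \<in> set qs'" using ps'ne qs'ne by simp_all
        then have "\<exists>w \<in> set ps'. w \<in> set qs'" using lasteq by auto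
        then obtain B w A where ps'eq: "ps' = B @ w # A" and wq': "w \<in> set qs'"
          and Bdis: "\<forall>y\<in>set B. y \<notin> set qs'"
          using split_list_first_propE[of ps' "\<lambda>w. w \<in> set qs'"] by blast
        obtain D C where qs'eq: "qs' = D @ w # C" using wq' split_list[of w qs'] by blast
        define cyc where "cyc = b # B @ w # rev D"
        have dps: "distinct ps'" "b \<notin> set ps'" using Cons.prems(2) by auto
        have dqs: "distinct qs'" "b \<notin> set qs'" using Cons.prems(4) qs by auto
        have notboth: "B \<noteq> [] \<or> D \<noteq> []"
          using uv ps'eq qs'eq by auto
        have wBw: "is_walk V E (B @ [w])" using wp(3) ps'eq walk_prefix[of V E "B @ [w]" A] by simp
        have hdBw: "hd (B @ w # rev D) = hd ps'" using ps'eq by (cases B) auto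
        have walk2: "is_walk V E (B @ w # rev D)"
        proof (cases "D = []")
          case True then show ?thesis using wBw by simp
        next
          case False
          have wD: "is_walk V E D" using wq(2) qs'eq walk_prefix[of V E D "w # C"] False by simp
          have eD: "{last D, w} \<in> E" using wq(2) qs'eq walk_append[of D "w # C" V E] False by simp
          have "is_walk V E ((B @ [w]) @ rev D)"
            using walk_append[of "B @ [w]" "rev D" V E] False wBw walk_rev[OF wD] eD
            by (simp add: hd_rev insert_commute)
          then show ?thesis by simp
        qed
        have walkc: "is_walk V E cyc"
          unfolding cyc_def using walk_Cons[of "B @ w # rev D" V E b] walk2 wp hdBw by simp
        have lastc: "last cyc = hd qs'"
          unfolding cyc_def using qs'eq by (cases "D = []") (auto simp: last_rev)
        have d1: "distinct B" "w \<notin> set B" using dps(1) ps'eq by auto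
        have d2: "distinct D" "w \<notin> set D" using dqs(1) qs'eq by auto
        have d3: "set B \<inter> set D = {}" using Bdis qs'eq by auto
        have d4: "b \<notin> set B" "b \<noteq> w" "b \<notin> set D" using dps(2) dqs(2) ps'eq qs'eq by auto
        have distc: "distinct cyc"
          unfolding cyc_def using d1 d2 d3 d4 by (simp add: disjoint_iff)
        have lenc: "length cyc \<ge> 3" unfolding cyc_def using notboth by (auto simp: Suc_le_eq)
        have "{last cyc, hd cyc} \<in> E" using lastc wq(1) by (simp add: cyc_def insert_commute)
        then have "has_cycle V E" unfolding has_cycle_def using walkc distc lenc by blast
        then show ?thesis using nc by simp
      qed
    qed
  qed
qed

lemma shortest_distinct:
  assumes "is_walk V E ps"
    and "\<forall>qs. is_walk V E qs \<and> hd qs = hd ps \<and> last qs = last ps \<longrightarrow> length ps \<le> length qs"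
  shows "distinct ps"
proof (rule ccontr)
  assume "\<not> distinct ps"
  then obtain xs ys zs y where ps: "ps = xs @ [y] @ ys @ [y] @ zs"
    using not_distinct_decomp by blast
  define qs where "qs = xs @ y # zs"
  have w1: "is_walk V E (xs @ [y])" using assms(1) ps walk_prefix[of V E "xs @ [y]" "ys @ [y] @ zs"] by simp
  have w2: "is_walk V E (y # zs)" using assms(1) ps walk_suffix[of V E "xs @ [y] @ ys" "y # zs"] by simp
  have wq: "is_walk V E qs"
  proof (cases "xs = []")
    case True then show ?thesis using w2 by (simp add: qs_def)
  next
    case False
    have "is_walk V E xs" "{last xs, y} \<in> E" using w1 walk_append[of xs "[y]" V E] False by auto
    then show ?thesis using walk_append[of xs "y # zs" V E] False w2 by (simp add: qs_def)
  qed
  have "hd qs = hd ps" "last qs = last ps" by (cases xs; simp add: qs_def ps)+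
  moreover have "length qs < length ps" by (simp add: qs_def ps)
  ultimately show False using assms(2) wq by fastforce
qed


definition cnd :: "'v set \<Rightarrow> 'v list \<Rightarrow> ('v \<Rightarrow> real) \<Rightarrow> ('v \<Rightarrow> real) \<Rightarrow> bool" where
  "cnd V ps x y \<longleftrightarrow> (\<forall>i. Suc i < length ps \<longrightarrow> x (ps ! Suc i) = y (ps ! i) \<and> x (ps ! Suc i) \<ge> 0) \<and>
     (\<forall>g\<in>V - set ps. x g = y g)"

definition RR :: "'v set \<Rightarrow> 'v set set \<Rightarrow> 'v \<times> ('v \<Rightarrow> real) \<Rightarrow> 'v \<times> ('v \<Rightarrow> real) \<Rightarrow> bool" where
  "RR V E p q \<longleftrightarrow> (\<exists>ps. is_walk V E ps \<and> distinct ps \<and> hd ps = fst p \<and> last ps = fst q \<and>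
      cnd V ps (snd p) (snd q))"

lemma edge_glue_sym: "edge_glue V E p q \<Longrightarrow> edge_glue V E q p"
  by (auto simp: edge_glue_def Let_def insert_commute)

lemma RR_step:
  assumes eok: "edges_ok V E" and nc: "\<not> has_cycle V E"
    and R: "RR V E (a, x) (b, y)" and G: "edge_glue V E (b, y) (d, z)"
  shows "RR V E (a, x) (d, z)"
proof -
  from R obtain ps where wps: "is_walk V E ps" and dps: "distinct ps" and hps: "hd ps = a"
    and lps: "last ps = b" and c: "cnd V ps x y" by (auto simp: RR_def)
  have bd: "{b, d} \<in> E" and yz: "y d = z b" and y0: "y d \<ge> 0"
    and oth: "\<forall>g\<in>V - {b, d}. y g = z g" and dV: "d \<in> V" and bV: "b \<in> V"
    using G by (auto simp: edge_glue_def Let_def in_union_def)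
  have bnd: "b \<noteq> d" using bd eok unfolding edges_ok_def
    by (metis doubleton_eq_iff insert_absorb2 singleton_insert_inj_eq)
  have psne: "ps \<noteq> []" using wps by (simp add: is_walk_def)
  have psV: "set ps \<subseteq> V" using wps by (simp add: is_walk_def)
  have c1: "\<And>i. Suc i < length ps \<Longrightarrow> x (ps ! Suc i) = y (ps ! i) \<and> x (ps ! Suc i) \<ge> 0"
    and c2: "\<And>g. g \<in> V \<Longrightarrow> g \<notin> set ps \<Longrightarrow> x g = y g" using c by (auto simp: cnd_def)
  have lastidx: "ps ! (length ps - 1) = b" using lps psne by (simp add: last_conv_nth)
  have notb: "\<And>i. Suc i < length ps \<Longrightarrow> ps ! i \<noteq> b"
  proof
    fix i assume "Suc i < length ps" "ps ! i = b"
    then have "ps ! i = ps ! (length ps - 1)" using lastidx by simp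
    then show False using dps \<open>Suc i < length ps\<close> by (simp add: nth_eq_iff_index_eq)
  qed
  show ?thesis
  proof (cases "d \<in> set ps")
    case dn: False
    define qs where "qs = ps @ [d]"
    have wq: "is_walk V E qs" unfolding qs_def
      using walk_append[of ps "[d]" V E] wps psne lps bd dV by (simp add: walk_single)
    have dq: "distinct qs" using dps dn by (simp add: qs_def)
    have hq: "hd qs = a" "last qs = d" using hps psne by (auto simp: qs_def)
    have "cnd V qs x z"
      unfolding cnd_def
    proof (rule conjI; intro allI impI ballI)
      fix i assume i: "Suc i < length qs"
      show "x (qs ! Suc i) = z (qs ! i) \<and> x (qs ! Suc i) \<ge> 0"
      proof (cases "Suc i < length ps")
        case True
        have "ps ! i \<in> set ps" using True by simp
        then have "ps ! i \<noteq> d" "ps ! i \<in> V" using dn psV by auto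
        then have "y (ps ! i) = z (ps ! i)" using oth notb[OF True] by auto
        then show ?thesis using c1[OF True] True by (simp add: qs_def nth_append)
      next
        case F2: False
        then have "Suc i = length ps" using i by (simp add: qs_def)
        then have ii: "i = length ps - 1" by simp
        have "qs ! Suc i = d" "qs ! i = b" using lastidx \<open>Suc i = length ps\<close> ii by (auto simp: qs_def nth_append)
        then show ?thesis using c2[OF dV dn] yz y0 by simp
      qed
    next
      fix g assume "g \<in> V - set qs"
      then have "g \<in> V" "g \<notin> set ps" "g \<noteq> d" by (auto simp: qs_def)
      moreover have "g \<noteq> b" using \<open>g \<notin> set ps\<close> lps psne by auto
      ultimately show "x g = z g" using c2 oth by auto
    qed
    then show ?thesis unfolding RR_def using wq dq hq by auto
  next
    case True
    then obtain A C where psAC: "ps = A @ d # C" using split_list[of d ps] by blast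
    have Cne: "C \<noteq> []" using psAC lps bnd by auto
    show ?thesis
    proof (cases "length C = 1")
      case True
      then obtain c where "C = [c]" by (cases C) auto
      then have ps2: "ps = (A @ [d]) @ [b]" using psAC lps by simp
      define qs where "qs = A @ [d]"
      have wq: "is_walk V E qs" using walk_prefix[of V E qs "[b]"] wps ps2 by (simp add: qs_def)
      have dq: "distinct qs" using dps ps2 by (simp add: qs_def)
      have hq: "hd qs = a" "last qs = d" using hps ps2 by (auto simp: qs_def hd_append)
      have bq: "b \<notin> set qs" using dps ps2 bnd by (auto simp: qs_def)
      have lq: "length ps = Suc (length qs)" using ps2 by (simp add: qs_def)
      have "cnd V qs x z"
        unfolding cnd_def
      proof (rule conjI; intro allI impI ballI)
        fix i assume i: "Suc i < length qs"
        then have i2: "Suc i < length ps" using lq by simp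
        have e1: "ps ! Suc i = qs ! Suc i" "ps ! i = qs ! i" using i ps2 by (auto simp: qs_def nth_append)
        have "qs ! i \<in> set A" using i by (simp add: qs_def nth_append)
        then have "qs ! i \<noteq> d" using dq by (auto simp: qs_def)
        moreover have "qs ! i \<in> V" "qs ! i \<noteq> b" using i psV bq ps2 nth_mem[of i qs] by (auto simp: qs_def)
        ultimately have "y (qs ! i) = z (qs ! i)" using oth by auto
        then show "x (qs ! Suc i) = z (qs ! i) \<and> x (qs ! Suc i) \<ge> 0" using c1[OF i2] e1 by simp
      next
        fix g assume g: "g \<in> V - set qs"
        show "x g = z g"
        proof (cases "g = b")
          case True
          have "Suc (length A) < length ps" "ps ! Suc (length A) = b" "ps ! length A = d"
            using ps2 by (auto simp: nth_append)
          then have "x b = y d" using c1 by metis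
          then show ?thesis using True yz by simp
        next
          case False
          then have "g \<notin> set ps" "g \<noteq> d" using g ps2 by (auto simp: qs_def)
          then show ?thesis using c2 oth g False by auto
        qed
      qed
      then show ?thesis unfolding RR_def using wq dq hq by auto
    next
      case False
      define cyc where "cyc = d # C"
      have lc: "0 < length C" using Cne by simp
      have "length C \<ge> 2" using lc False by linarith
      then have "length cyc \<ge> 3" by (simp add: cyc_def)
      moreover have "is_walk V E cyc" using walk_suffix[of V E A cyc] wps psAC by (simp add: cyc_def)
      moreover have "distinct cyc" using dps psAC by (simp add: cyc_def)
      moreover have "{last cyc, hd cyc} \<in> E" using lps psAC Cne bd by (simp add: cyc_def)
      ultimately have "has_cycle V E" unfolding has_cycle_def by blast
      then show ?thesis using nc by simp
    qed
  qed
qed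

lemma RR_inv:
  assumes eok: "edges_ok V E" and nc: "\<not> has_cycle V E"
  shows "equivclp (edge_glue V E) p q \<Longrightarrow> in_union V p \<Longrightarrow> RR V E p q"
  unfolding equivclp_def
proof (induction rule: rtranclp_induct)
  case base
  have "cnd V [fst p] (snd p) (snd p)" by (simp add: cnd_def)
  then show ?case unfolding RR_def using base by (intro exI[of _ "[fst p]"]) (auto simp: walk_single in_union_def)
next
  case (step q r)
  then have R: "RR V E (fst p, snd p) (fst q, snd q)" by simp
  from step(2) have "edge_glue V E q r \<or> edge_glue V E r q" by (simp add: symclp_def)
  then have "edge_glue V E q r" using edge_glue_sym by blast
  then have "edge_glue V E (fst q, snd q) (fst r, snd r)" by simp
  from RR_step[OF eok nc R this] show ?case by simp
qed

lemma chain: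
  "is_walk V E ps \<Longrightarrow> distinct ps \<Longrightarrow> x \<in> chart V (hd ps) \<Longrightarrow> y \<in> chart V (last ps) \<Longrightarrow>
    cnd V ps x y \<Longrightarrow> equivclp (edge_glue V E) (hd ps, x) (last ps, y)"
proof (induction ps arbitrary: x)
  case Nil then show ?case by (simp add: is_walk_def)
next
  case (Cons al ps')
  show ?case
  proof (cases "ps' = []")
    case True
    have "x = y"
    proof (rule extensionalityI[of _ "V - {al}"])
      show "x \<in> extensional (V - {al})" using Cons.prems(3) by (simp add: chart_def)
      show "y \<in> extensional (V - {al})" using Cons.prems(4) True by (simp add: chart_def)
      fix g assume "g \<in> V - {al}" then show "x g = y g" using Cons.prems(5) True by (simp add: cnd_def)
    qed
    then show ?thesis using True by simp
  next
    case False
    define ga where "ga = hd ps'"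
    have wal: "al \<in> V" "{al, ga} \<in> E" "is_walk V E ps'"
      using Cons.prems(1) walk_Cons[OF False] by (auto simp: ga_def)
    have psV: "set ps' \<subseteq> V" using wal(3) by (simp add: is_walk_def)
    have gaV: "ga \<in> V" using psV hd_in_set[OF False] by (auto simp: ga_def)
    have dps': "distinct ps'" "al \<notin> set ps'" using Cons.prems(2) by auto
    have ps0: "ps' ! 0 = ga" using False by (simp add: ga_def hd_conv_nth)
    have c1: "\<And>i. Suc i < length (al # ps') \<Longrightarrow> x ((al # ps') ! Suc i) = y ((al # ps') ! i) \<and> x ((al # ps') ! Suc i) \<ge> 0"
      and c2: "\<And>g. g \<in> V \<Longrightarrow> g \<notin> set (al # ps') \<Longrightarrow> x g = y g" using Cons.prems(5) by (auto simp: cnd_def)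
    have x0: "x ga = y al" "x ga \<ge> 0" using c1[of 0] False ps0 by auto
    define w where "w = (\<lambda>g. if g \<in> V - {ga} then (if g = al then x ga else x g) else undefined)"
    have wch: "w \<in> chart V ga" by (simp add: chart_def w_def extensional_def)
    have alga: "al \<noteq> ga" using dps' hd_in_set[OF False] by (auto simp: ga_def)
    have xch: "x \<in> chart V al" using Cons.prems(3) by simp
    have eg: "edge_glue V E (al, x) (ga, w)"
      unfolding edge_glue_def Let_def in_union_def
      using wal gaV wch xch alga x0 by (auto simp: w_def)
    have "cnd V ps' w y"
      unfolding cnd_def
    proof (rule conjI; intro allI impI ballI)
      fix i assume i: "Suc i < length ps'"
      have m: "ps' ! Suc i \<in> set ps'" using i by simp
      have "ps' ! Suc i \<noteq> ga"
      proof
        assume "ps' ! Suc i = ga"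
        then have "ps' ! Suc i = ps' ! 0" using ps0 by simp
        moreover have l0: "0 < length ps'" using i by linarith
        ultimately show False using nth_eq_iff_index_eq[OF dps'(1) i l0] by simp
      qed
      moreover have "ps' ! Suc i \<noteq> al" using m dps' by auto
      ultimately have "w (ps' ! Suc i) = x (ps' ! Suc i)" using m psV by (auto simp: w_def)
      then show "w (ps' ! Suc i) = y (ps' ! i) \<and> w (ps' ! Suc i) \<ge> 0"
        using c1[of "Suc i"] i by simp
    next
      fix g assume g: "g \<in> V - set ps'"
      have "g \<noteq> ga" using g False by (auto simp: ga_def)
      show "w g = y g"
      proof (cases "g = al")
        case True then show ?thesis using x0 \<open>g \<noteq> ga\<close> g by (simp add: w_def)
      next
        case F: False then show ?thesis using c2 g \<open>g \<noteq> ga\<close> by (auto simp: w_def)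
      qed
    qed
    then have "equivclp (edge_glue V E) (hd ps', w) (last ps', y)"
      using Cons.IH[of w] wal(3) dps' wch Cons.prems(4) False by (simp add: ga_def)
    moreover have "equivclp (edge_glue V E) (al, x) (ga, w)"
      using eg unfolding equivclp_def by (blast intro: symclpI)
    ultimately show ?thesis using False
      by (simp add: ga_def) (meson transpE transp_equivclp)
  qed
qed

theorem lemma2p6:
  fixes V :: "'v set" and E :: "'v set set" and a b :: 'v and ps :: "'v list"
    and x y :: "'v \<Rightarrow> real"
  assumes "is_tree V E"
    and "a \<in> V" and "b \<in> V" and "a \<noteq> b"
    and "is_walk V E ps" and "hd ps = a" and "last ps = b"
    and "\<forall>qs. is_walk V E qs \<and> hd qs = a \<and> last qs = b \<longrightarrow> length ps \<le> length qs"
    and "x \<in> chart V a" and "y \<in> chart V b"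
  shows "arb_equiv V E (a, x) (b, y) \<longleftrightarrow>
    ((\<forall>i. Suc i < length ps \<longrightarrow> x (ps ! Suc i) = y (ps ! i) \<and> x (ps ! Suc i) \<ge> 0) \<and>
     (\<forall>g\<in>V - set ps. x g = y g))"
proof -
  have eok: "edges_ok V E" and nc: "\<not> has_cycle V E" using assms(1) by (auto simp: is_tree_def)
  have dps: "distinct ps" using shortest_distinct[of V E ps] assms(5-8) by simp
  show ?thesis
  proof
    assume "arb_equiv V E (a, x) (b, y)"
    then have "RR V E (a, x) (b, y)"
      using RR_inv[OF eok nc] assms(2,9) by (auto simp: arb_equiv_def in_union_def)
    then obtain qs where "is_walk V E qs" "distinct qs" "hd qs = a" "last qs = b" "cnd V qs x y"
      by (auto simp: RR_def)
    moreover have "qs = ps" using walk_unique[OF nc] calculation assms(5-7) dps by metis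
    ultimately have "cnd V ps x y" by simp
    then show "(\<forall>i. Suc i < length ps \<longrightarrow> x (ps ! Suc i) = y (ps ! i) \<and> x (ps ! Suc i) \<ge> 0) \<and>
     (\<forall>g\<in>V - set ps. x g = y g)" unfolding cnd_def by blast
  next
    assume "(\<forall>i. Suc i < length ps \<longrightarrow> x (ps ! Suc i) = y (ps ! i) \<and> x (ps ! Suc i) \<ge> 0) \<and>
     (\<forall>g\<in>V - set ps. x g = y g)"
    then have "cnd V ps x y" unfolding cnd_def .
    then show "arb_equiv V E (a, x) (b, y)"
      using chain[of V E ps x y] assms(5-10) dps by (simp add: arb_equiv_def)
  qed
qed

end
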